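(* Let $(G_1,\prec_1)$ and $(G_2,\prec_2)$ be POP-graphs such that the number of output edges of $G_1$ equals the number of input edges of $G_2$. Then $\prec_2\circ\prec_1$ is a planar order on $G_2\circ G_1$.
   Context: A progressive graph is a finite directed acyclic graph (parallel edges allowed) in which every source and every sink has degree one; degree-one vertices are boundary vertices. An input edge is an edge whose initial vertex is a boundary vertex; an output edge one whose terminal vertex is a boundary vertex. For edges write $e\to e'$ if $e\neq e'$ and there is a directed path whose first edge is $e$ and last edge is $e'$. A planar order on $G$ is a linear order $\prec$ on $E(G)$ such that (P1) $e_1\to e_2$ implies $e_1\prec e_2$; (P2) if $e_1\prec e_2\prec e_3$ and $e_1\to e_3$ then $e_1\to e_2$ or $e_2\to e_3$. A POP-graph is a progressive graph with a planar order. Composition: let $(G_1,\prec_1)$, $(G_2,\prec_2)$ be POP-graphs, $G_1$ with output edges $o_1\prec_1\cdots\prec_1 o_n$ and $G_2$ with input edges $i_1\prec_2\cdots\prec_2 i_n$. The progressive graph $G_2\circ G_1$ is obtained from $G_1\sqcup G_2$ by deleting the sinks of $G_1$, the sources of $G_2$ and the edges $o_k,i_k$, and adding for each $k$ a new edge $\overline{e_k}$ from the initial vertex of $o_k$ to the terminal vertex of $i_k$. Let $Q_1=\{e\in E(G_1): e\prec_1 o_1\}$, $Q_k=\{e: o_{k-1}\prec_1 e\prec_1 o_k\}$ ($2\le k\le n$), $P_k=\{e\in E(G_2): i_k\prec_2 e\prec_2 i_{k+1}\}$ ($1\le k\le n-1$), $P_n=\{e: i_n\prec_2 e\}$. The composition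 $\prec_2\circ\prec_1$ is the linear order on $E(G_2\circ G_1)$ listing $Q_1,\{\overline{e_1}\},P_1,Q_2,\{\overline{e_2}\},P_2,\dots,Q_n,\{\overline{e_n}\},P_n$ consecutively, each $Q_k$ ordered by $\prec_1$ and each $P_k$ by $\prec_2$. *)

theory Defs
  imports "Graph_Theory.Digraph"
begin

definition degree :: "('v,'e) pre_digraph \<Rightarrow> 'v \<Rightarrow> nat" where
  "degree G v = in_degree G v + out_degree G v"

definition is_source :: "('v,'e) pre_digraph \<Rightarrow> 'v \<Rightarrow> bool" where
  "is_source G v \<longleftrightarrow> v \<in> verts G \<and> in_degree G v = 0"

definition is_sink :: "('v,'e) pre_digraph \<Rightarrow> 'v \<Rightarrow> bool" where
  "is_sink G v \<longleftrightarrow> v \<in> verts G \<and> out_degree G v = 0"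

definition boundary :: "('v,'e) pre_digraph \<Rightarrow> 'v \<Rightarrow> bool" where
  "boundary G v \<longleftrightarrow> v \<in> verts G \<and> degree G v = 1"

definition progressive :: "('v,'e) pre_digraph \<Rightarrow> bool" where
  "progressive G \<longleftrightarrow> fin_digraph G \<and> acyclic (arcs_ends G)
     \<and> (\<forall>v. is_source G v \<longrightarrow> degree G v = 1)
     \<and> (\<forall>v. is_sink G v \<longrightarrow> degree G v = 1)"

definition input_edges :: "('v,'e) pre_digraph \<Rightarrow> 'e set" where
  "input_edges G = {e \<in> arcs G. boundary G (tail G e)}"

definition output_edges :: "('v,'e) pre_digraph \<Rightarrow> 'e set" where
  "output_edges G = {e \<in> arcs G. boundary G (head G e)}"

definition edge_succ :: "('v,'e) pre_digraph \<Rightarrow> ('e \<times> 'e) set" where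
  "edge_succ G = {(e, e'). e \<in> arcs G \<and> e' \<in> arcs G \<and> head G e = tail G e'}"

definition edge_path :: "('v,'e) pre_digraph \<Rightarrow> 'e \<Rightarrow> 'e \<Rightarrow> bool" where
  "edge_path G e e' \<longleftrightarrow> e \<noteq> e' \<and> (e, e') \<in> (edge_succ G)\<^sup>+"

text \<open>A strict linear order on the edge set (only its restriction to the edges matters).\<close>
definition linear_order_on_edges :: "'e set \<Rightarrow> ('e \<Rightarrow> 'e \<Rightarrow> bool) \<Rightarrow> bool" where
  "linear_order_on_edges E lt \<longleftrightarrow>
     (\<forall>a\<in>E. \<not> lt a a)
   \<and> (\<forall>a\<in>E. \<forall>b\<in>E. \<forall>c\<in>E. lt a b \<longrightarrow> lt b c \<longrightarrow> lt a c)
   \<and> (\<forall>a\<in>E. \<forall>b\<in>E. a \<noteq> b \<longrightarrow> lt a b \<or> lt b a)"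

definition planar_order :: "('v,'e) pre_digraph \<Rightarrow> ('e \<Rightarrow> 'e \<Rightarrow> bool) \<Rightarrow> bool" where
  "planar_order G lt \<longleftrightarrow>
     linear_order_on_edges (arcs G) lt
   \<and> (\<forall>e1\<in>arcs G. \<forall>e2\<in>arcs G. edge_path G e1 e2 \<longrightarrow> lt e1 e2)
   \<and> (\<forall>e1\<in>arcs G. \<forall>e2\<in>arcs G. \<forall>e3\<in>arcs G.
        lt e1 e2 \<longrightarrow> lt e2 e3 \<longrightarrow> edge_path G e1 e3 \<longrightarrow>
        edge_path G e1 e2 \<or> edge_path G e2 e3)"

definition POP_graph :: "('v,'e) pre_digraph \<Rightarrow> ('e \<Rightarrow> 'e \<Rightarrow> bool) \<Rightarrow> bool" where
  "POP_graph G lt \<longleftrightarrow> progressive G \<and> planar_order G lt"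

definition rank_in :: "('e \<Rightarrow> 'e \<Rightarrow> bool) \<Rightarrow> 'e set \<Rightarrow> 'e \<Rightarrow> nat" where
  "rank_in lt S x = card {y \<in> S. lt y x}"

text \<open>The (k+1)-th element of S in the order \<open>lt\<close> (k is 0-based): so
  \<open>nth_in lt (output_edges G1) k\<close> is \<open>o_(k+1)\<close>.\<close>
definition nth_in :: "('e \<Rightarrow> 'e \<Rightarrow> bool) \<Rightarrow> 'e set \<Rightarrow> nat \<Rightarrow> 'e" where
  "nth_in lt S k = (THE x. x \<in> S \<and> rank_in lt S x = k)"

text \<open>Edges of the composite: old edges of G1, old edges of G2, and the new
  edges \<open>Glue k\<close> standing for \<open>\<overline>e_(k+1)\<close>.\<close>
datatype ('a, 'b) cedge = Old1 'a | Old2 'b | Glue nat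

definition comp_graph ::
  "('v1,'e1) pre_digraph \<Rightarrow> ('e1 \<Rightarrow> 'e1 \<Rightarrow> bool) \<Rightarrow>
   ('v2,'e2) pre_digraph \<Rightarrow> ('e2 \<Rightarrow> 'e2 \<Rightarrow> bool) \<Rightarrow>
   ('v1 + 'v2, ('e1,'e2) cedge) pre_digraph" where
  "comp_graph G1 less1 G2 less2 =
    (let O1 = output_edges G1; I2 = input_edges G2; n = card O1 in
     \<lparr> verts = Inl ` {v \<in> verts G1. \<not> is_sink G1 v} \<union> Inr ` {v \<in> verts G2. \<not> is_source G2 v},
       arcs = Old1 ` (arcs G1 - O1) \<union> Old2 ` (arcs G2 - I2) \<union> Glue ` {..<n},
       tail = (\<lambda>x. case x of Old1 e \<Rightarrow> Inl (tail G1 e) | Old2 e \<Rightarrow> Inr (tail G2 e)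
                     | Glue k \<Rightarrow> Inl (tail G1 (nth_in less1 O1 k))),
       head = (\<lambda>x. case x of Old1 e \<Rightarrow> Inl (head G1 e) | Old2 e \<Rightarrow> Inr (head G2 e)
                     | Glue k \<Rightarrow> Inr (head G2 (nth_in less2 I2 k))) \<rparr>)"

text \<open>Block index realizing the consecutive listing
  \<open>Q_1, \<overline>e_1, P_1, Q_2, \<overline>e_2, P_2, \<dots>\<close>:
  \<open>Q_(k+1)\<close> gets key 3k, \<open>\<overline>e_(k+1)\<close> gets 3k+1, \<open>P_(k+1)\<close> gets 3k+2.
  An edge e of G1 lies in \<open>Q_(k+1)\<close> where k is the number of output edges below it;
  an edge e of G2 lies in \<open>P_j\<close> where j is the number of input edges below it.\<close>
definition comp_key ::
  "('v1,'e1) pre_digraph \<Rightarrow> ('e1 \<Rightarrow> 'e1 \<Rightarrow> bool) \<Rightarrow>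
   ('v2,'e2) pre_digraph \<Rightarrow> ('e2 \<Rightarrow> 'e2 \<Rightarrow> bool) \<Rightarrow> ('e1,'e2) cedge \<Rightarrow> nat" where
  "comp_key G1 less1 G2 less2 x =
    (case x of Old1 e \<Rightarrow> 3 * rank_in less1 (output_edges G1) e
             | Glue k \<Rightarrow> 3 * k + 1
             | Old2 e \<Rightarrow> 3 * rank_in less2 (input_edges G2) e - 1)"

definition comp_within ::
  "('e1 \<Rightarrow> 'e1 \<Rightarrow> bool) \<Rightarrow> ('e2 \<Rightarrow> 'e2 \<Rightarrow> bool) \<Rightarrow> ('e1,'e2) cedge \<Rightarrow> ('e1,'e2) cedge \<Rightarrow> bool" where
  "comp_within less1 less2 x y =
    (case (x, y) of (Old1 a, Old1 b) \<Rightarrow> less1 a b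
                  | (Old2 a, Old2 b) \<Rightarrow> less2 a b
                  | _ \<Rightarrow> False)"

definition comp_order ::
  "('v1,'e1) pre_digraph \<Rightarrow> ('e1 \<Rightarrow> 'e1 \<Rightarrow> bool) \<Rightarrow>
   ('v2,'e2) pre_digraph \<Rightarrow> ('e2 \<Rightarrow> 'e2 \<Rightarrow> bool) \<Rightarrow>
   ('e1,'e2) cedge \<Rightarrow> ('e1,'e2) cedge \<Rightarrow> bool" where
  "comp_order G1 less1 G2 less2 x y =
    (let kx = comp_key G1 less1 G2 less2 x; ky = comp_key G1 less1 G2 less2 y in
     kx < ky \<or> (kx = ky \<and> comp_within less1 less2 x y))"

end

theory Submission
  imports Defs
begin


lemma lin_irrefl: "linear_order_on_edges E lt \<Longrightarrow> a \<in> E \<Longrightarrow> \<not> lt a a"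
  by (simp add: linear_order_on_edges_def)
lemma lin_trans: "linear_order_on_edges E lt \<Longrightarrow> a \<in> E \<Longrightarrow> b \<in> E \<Longrightarrow> c \<in> E \<Longrightarrow> lt a b \<Longrightarrow> lt b c \<Longrightarrow> lt a c"
  unfolding linear_order_on_edges_def by blast
lemma lin_total: "linear_order_on_edges E lt \<Longrightarrow> a \<in> E \<Longrightarrow> b \<in> E \<Longrightarrow> a \<noteq> b \<Longrightarrow> lt a b \<or> lt b a"
  unfolding linear_order_on_edges_def by blast

lemma rank_mono:
  assumes L: "linear_order_on_edges E lt" and "S \<subseteq> E" "finite S" "x\<in>E" "y\<in>E" "lt x y"
  shows "rank_in lt S x \<le> rank_in lt S y"
  unfolding rank_in_def
proof (rule card_mono)
  show "finite {z \<in> S. lt z y}" using assms by simp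
  show "{z \<in> S. lt z x} \<subseteq> {z \<in> S. lt z y}" using assms lin_trans[OF L] by blast
qed

lemma rank_strict:
  assumes L: "linear_order_on_edges E lt" and "S \<subseteq> E" "finite S" "x\<in>S" "y\<in>E" "lt x y"
  shows "rank_in lt S x < rank_in lt S y"
  unfolding rank_in_def
proof (rule psubset_card_mono)
  show "finite {z \<in> S. lt z y}" using assms by simp
  have "x \<notin> {z \<in> S. lt z x}" using assms lin_irrefl[OF L] by blast
  moreover have "x \<in> {z \<in> S. lt z y}" using assms by blast
  moreover have "{z \<in> S. lt z x} \<subseteq> {z \<in> S. lt z y}" using assms lin_trans[OF L] by blast
  ultimately show "{z \<in> S. lt z x} \<subset> {z \<in> S. lt z y}" by blast
qed

lemma rank_le_card: "finite S \<Longrightarrow> rank_in lt S x \<le> card S"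
  unfolding rank_in_def by (rule card_mono) auto

lemma rank_lt_card:
  assumes L: "linear_order_on_edges E lt" and "S \<subseteq> E" "finite S" "x\<in>S"
  shows "rank_in lt S x < card S"
  unfolding rank_in_def
proof (rule psubset_card_mono)
  show "finite S" by fact
  show "{z \<in> S. lt z x} \<subset> S" using assms lin_irrefl[OF L] by blast
qed

lemma rank_lt_iff1:
  assumes L: "linear_order_on_edges E lt" and "S \<subseteq> E" "finite S" "x\<in>S" "y\<in>E" "x \<noteq> y"
  shows "lt x y \<longleftrightarrow> rank_in lt S x < rank_in lt S y"
proof
  assume "lt x y" thus "rank_in lt S x < rank_in lt S y" using rank_strict[OF assms(1-5)] by blast
next
  assume a: "rank_in lt S x < rank_in lt S y"
  show "lt x y"
  proof (rule ccontr)
    assume "\<not> lt x y"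
    hence "lt y x" using lin_total[OF L, of x y] assms by blast
    hence "rank_in lt S y \<le> rank_in lt S x" using rank_mono[OF L, of S y x] assms by blast
    thus False using a by simp
  qed
qed

lemma rank_lt_iff2:
  assumes L: "linear_order_on_edges E lt" and "S \<subseteq> E" "finite S" "x\<in>E" "y\<in>S" "x \<noteq> y"
  shows "lt x y \<longleftrightarrow> rank_in lt S x \<le> rank_in lt S y"
proof
  assume "lt x y" thus "rank_in lt S x \<le> rank_in lt S y" using rank_mono[OF L, of S x y] assms by blast
next
  assume a: "rank_in lt S x \<le> rank_in lt S y"
  show "lt x y"
  proof (rule ccontr)
    assume "\<not> lt x y"
    hence "lt y x" using lin_total[OF L, of x y] assms by blast
    hence "rank_in lt S y < rank_in lt S x" using rank_strict[OF L, of S y x] assms by blast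
    thus False using a by simp
  qed
qed

lemma rank_inj:
  assumes L: "linear_order_on_edges E lt" and "S \<subseteq> E" "finite S"
  shows "inj_on (rank_in lt S) S"
proof (rule inj_onI)
  fix x y assume xy: "x \<in> S" "y \<in> S" "rank_in lt S x = rank_in lt S y"
  show "x = y"
  proof (rule ccontr)
    assume "x \<noteq> y"
    hence "lt x y \<or> lt y x" using lin_total[OF L, of x y] xy assms by blast
    thus False using rank_strict[OF L, of S x y] rank_strict[OF L, of S y x] xy assms by auto
  qed
qed

lemma rank_image:
  assumes L: "linear_order_on_edges E lt" and "S \<subseteq> E" "finite S"
  shows "rank_in lt S ` S = {..<card S}"
proof (rule card_subset_eq)
  show "finite {..<card S}" by simp
  show "rank_in lt S ` S \<subseteq> {..<card S}" using rank_lt_card[OF assms] by auto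
  show "card (rank_in lt S ` S) = card {..<card S}"
    using card_image[OF rank_inj[OF assms]] by simp
qed

lemma nth_in_props:
  assumes L: "linear_order_on_edges E lt" and "S \<subseteq> E" "finite S" "k < card S"
  shows "nth_in lt S k \<in> S \<and> rank_in lt S (nth_in lt S k) = k"
proof -
  have ex: "\<exists>!x. x \<in> S \<and> rank_in lt S x = k"
  proof -
    have "k \<in> rank_in lt S ` S" using rank_image[OF assms(1-3)] assms(4) by simp
    then obtain x where "x \<in> S" "rank_in lt S x = k" by blast
    moreover have "\<And>y. y \<in> S \<Longrightarrow> rank_in lt S y = k \<Longrightarrow> y = x"
      using rank_inj[OF assms(1-3)] calculation unfolding inj_on_def by blast
    ultimately show ?thesis by blast
  qed
  have "(THE x. x \<in> S \<and> rank_in lt S x = k) \<in> S \<and> rank_in lt S (THE x. x \<in> S \<and> rank_in lt S x = k) = k"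
    using theI'[OF ex] .
  thus ?thesis by (simp only: nth_in_def)
qed

lemma nth_in_rank:
  assumes L: "linear_order_on_edges E lt" and "S \<subseteq> E" "finite S" "x \<in> S"
  shows "nth_in lt S (rank_in lt S x) = x"
proof -
  have k: "rank_in lt S x < card S" using rank_lt_card[OF assms] .
  have "nth_in lt S (rank_in lt S x) \<in> S \<and> rank_in lt S (nth_in lt S (rank_in lt S x)) = rank_in lt S x"
    by (rule nth_in_props[OF assms(1-3) k])
  thus ?thesis using rank_inj[OF assms(1-3)] assms(4) unfolding inj_on_def by blast
qed

lemma finite_has_max:
  assumes L: "linear_order_on_edges E lt" and "R \<subseteq> E" "finite R" "R \<noteq> {}"
  shows "\<exists>c\<in>R. \<forall>d\<in>R. \<not> lt c d"
proof -
  let ?f = "rank_in lt R"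
  have "Max (?f ` R) \<in> ?f ` R" using assms by simp
  then obtain c where c: "c \<in> R" "?f c = Max (?f ` R)" by (metis imageE)
  have "\<not> lt c d" if d: "d \<in> R" for d
  proof
    assume "lt c d"
    hence "?f c < ?f d" using rank_strict[OF L, of R c d] assms c d by blast
    moreover have "?f d \<le> Max (?f ` R)" using assms d by simp
    ultimately show False using c by simp
  qed
  thus ?thesis using c by blast
qed

lemma finite_has_min:
  assumes L: "linear_order_on_edges E lt" and "R \<subseteq> E" "finite R" "R \<noteq> {}"
  shows "\<exists>c\<in>R. \<forall>d\<in>R. \<not> lt d c"
proof -
  let ?f = "rank_in lt R"
  have "Min (?f ` R) \<in> ?f ` R" using assms by simp
  then obtain c where c: "c \<in> R" "?f c = Min (?f ` R)" by (metis imageE)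
  have "\<not> lt d c" if d: "d \<in> R" for d
  proof
    assume "lt d c"
    hence "?f d < ?f c" using rank_strict[OF L, of R d c] assms c d by blast
    moreover have "Min (?f ` R) \<le> ?f d" using assms d by simp
    ultimately show False using c by simp
  qed
  thus ?thesis using c by blast
qed



lemma path_arcs_gen: "(a,b) \<in> (edge_succ G)\<^sup>+ \<Longrightarrow> a \<in> arcs G \<and> b \<in> arcs G"
proof -
  have "edge_succ G \<subseteq> arcs G \<times> arcs G" by (auto simp: edge_succ_def)
  hence "(edge_succ G)\<^sup>+ \<subseteq> arcs G \<times> arcs G" by (rule trancl_subset_Sigma)
  thus "(a,b) \<in> (edge_succ G)\<^sup>+ \<Longrightarrow> a \<in> arcs G \<and> b \<in> arcs G" by blast
qed

context
  fixes G :: "('v,'e) pre_digraph" and lt :: "'e \<Rightarrow> 'e \<Rightarrow> bool"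
  assumes POP: "POP_graph G lt"
begin

lemma pop_fin: "fin_digraph G" using POP by (simp add: POP_graph_def progressive_def)
lemma pop_lin: "linear_order_on_edges (arcs G) lt" using POP by (simp add: POP_graph_def planar_order_def)
lemma pop_acyc: "acyclic (arcs_ends G)" using POP by (simp add: POP_graph_def progressive_def)
lemma pop_sink: "is_sink G v \<Longrightarrow> degree G v = 1" using POP by (simp add: POP_graph_def progressive_def)
lemma pop_source: "is_source G v \<Longrightarrow> degree G v = 1" using POP by (simp add: POP_graph_def progressive_def)

lemma succ_arcs: "(a,b) \<in> edge_succ G \<Longrightarrow> a \<in> arcs G \<and> b \<in> arcs G"
  by (simp add: edge_succ_def)

lemma path_arcs: "(a,b) \<in> (edge_succ G)\<^sup>+ \<Longrightarrow> a \<in> arcs G \<and> b \<in> arcs G"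
proof -
  have "edge_succ G \<subseteq> arcs G \<times> arcs G" by (auto simp: edge_succ_def)
  hence "(edge_succ G)\<^sup>+ \<subseteq> arcs G \<times> arcs G" by (rule trancl_subset_Sigma)
  thus "(a,b) \<in> (edge_succ G)\<^sup>+ \<Longrightarrow> a \<in> arcs G \<and> b \<in> arcs G" by blast
qed

lemma pop_p1: "(a,c) \<in> (edge_succ G)\<^sup>+ \<Longrightarrow> a \<noteq> c \<Longrightarrow> lt a c"
  using POP path_arcs[of a c] unfolding POP_graph_def planar_order_def edge_path_def by blast

lemma no_loop: "(a,a) \<notin> edge_succ G"
proof
  assume "(a,a) \<in> edge_succ G"
  hence a: "a \<in> arcs G" "head G a = tail G a" by (auto simp: edge_succ_def)
  have "arc_to_ends G a \<in> arcs_ends G" using a by (simp add: arcs_ends_def)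
  hence "(tail G a, tail G a) \<in> arcs_ends G" using a by (simp add: arc_to_ends_def)
  thus False using pop_acyc unfolding acyclic_def by blast
qed

lemma out_no_succ: "p \<in> output_edges G \<Longrightarrow> (p,e) \<notin> edge_succ G"
proof
  assume p: "p \<in> output_edges G" and oe: "(p,e) \<in> edge_succ G"
  interpret fin_digraph G by (rule pop_fin)
  let ?v = "head G p"
  have d: "degree G ?v = 1" using p by (simp add: output_edges_def boundary_def)
  have "p \<in> in_arcs G ?v" using p by (simp add: output_edges_def)
  hence "in_arcs G ?v \<noteq> {}" by blast
  hence "0 < card (in_arcs G ?v)" using finite_in_arcs[of ?v] card_gt_0_iff by blast
  hence "in_degree G ?v \<ge> 1" unfolding in_degree_def by simp
  moreover have "e \<in> out_arcs G ?v" using oe by (simp add: edge_succ_def)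
  hence "out_arcs G ?v \<noteq> {}" by blast
  hence "0 < card (out_arcs G ?v)" using finite_out_arcs[of ?v] card_gt_0_iff by blast
  hence "out_degree G ?v \<ge> 1" unfolding out_degree_def by simp
  ultimately show False using d by (simp add: degree_def)
qed

lemma in_no_pred: "i \<in> input_edges G \<Longrightarrow> (e,i) \<notin> edge_succ G"
proof
  assume i: "i \<in> input_edges G" and ei: "(e,i) \<in> edge_succ G"
  interpret fin_digraph G by (rule pop_fin)
  let ?v = "tail G i"
  have d: "degree G ?v = 1" using i by (simp add: input_edges_def boundary_def)
  have "i \<in> out_arcs G ?v" using i by (simp add: input_edges_def)
  hence "out_arcs G ?v \<noteq> {}" by blast
  hence "0 < card (out_arcs G ?v)" using finite_out_arcs[of ?v] card_gt_0_iff by blast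
  hence "out_degree G ?v \<ge> 1" unfolding out_degree_def by simp
  moreover have "e \<in> in_arcs G ?v" using ei by (simp add: edge_succ_def)
  hence "in_arcs G ?v \<noteq> {}" by blast
  hence "0 < card (in_arcs G ?v)" using finite_in_arcs[of ?v] card_gt_0_iff by blast
  hence "in_degree G ?v \<ge> 1" unfolding in_degree_def by simp
  ultimately show False using d by (simp add: degree_def)
qed

lemma out_no_path: "p \<in> output_edges G \<Longrightarrow> (p,e) \<notin> (edge_succ G)\<^sup>+"
  using out_no_succ by (blast dest: tranclD)

lemma in_no_path: "i \<in> input_edges G \<Longrightarrow> (e,i) \<notin> (edge_succ G)\<^sup>+"
  using in_no_pred by (blast dest: tranclD2)

lemma pop_p2:
  assumes "a \<in> arcs G" "b \<in> arcs G" "c \<in> arcs G" "lt a b" "lt b c" "(a,c) \<in> (edge_succ G)\<^sup>+"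
  shows "(a,b) \<in> (edge_succ G)\<^sup>+ \<or> (b,c) \<in> (edge_succ G)\<^sup>+"
proof -
  have L: "linear_order_on_edges (arcs G) lt" by (rule pop_lin)
  have "lt a c" using lin_trans[OF L] assms by blast
  hence "a \<noteq> c" using lin_irrefl[OF L] assms by blast
  hence "edge_path G a c" using assms by (simp add: edge_path_def)
  hence "edge_path G a b \<or> edge_path G b c"
    using POP assms unfolding POP_graph_def planar_order_def by blast
  thus ?thesis by (auto simp: edge_path_def)
qed

lemma exists_out:
  assumes e: "e \<in> arcs G"
  shows "\<exists>p\<in>output_edges G. (e,p) \<in> (edge_succ G)\<^sup>*"
proof -
  interpret fin_digraph G by (rule pop_fin)
  define R where "R = {c \<in> arcs G. (e,c) \<in> (edge_succ G)\<^sup>*}"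
  have "R \<subseteq> arcs G" "finite R" "R \<noteq> {}" using e unfolding R_def by auto
  then obtain c where c: "c \<in> R" "\<forall>d\<in>R. \<not> lt c d"
    using finite_has_max[OF pop_lin] by blast
  have "out_degree G (head G c) = 0"
  proof (rule ccontr)
    assume "out_degree G (head G c) \<noteq> 0"
    hence "0 < card (out_arcs G (head G c))" unfolding out_degree_def by simp
    hence "out_arcs G (head G c) \<noteq> {}" using card_gt_0_iff by blast
    then obtain c' where c': "c' \<in> out_arcs G (head G c)" by blast
    have cc: "(c,c') \<in> edge_succ G" using c c' by (auto simp: edge_succ_def R_def)
    hence "c' \<in> R" using c unfolding R_def by (auto intro: rtrancl_into_rtrancl simp: edge_succ_def)
    moreover have "c \<noteq> c'" using cc no_loop by blast
    hence "lt c c'" using pop_p1 cc by blast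
    ultimately show False using c by blast
  qed
  moreover have "head G c \<in> verts G" using c unfolding R_def by auto
  ultimately have "is_sink G (head G c)" by (simp add: is_sink_def)
  hence "boundary G (head G c)" using pop_sink \<open>head G c \<in> verts G\<close> by (simp add: boundary_def)
  hence "c \<in> output_edges G" using c unfolding R_def output_edges_def by auto
  thus ?thesis using c unfolding R_def by blast
qed

lemma exists_in:
  assumes e: "e \<in> arcs G"
  shows "\<exists>i\<in>input_edges G. (i,e) \<in> (edge_succ G)\<^sup>*"
proof -
  interpret fin_digraph G by (rule pop_fin)
  define R where "R = {c \<in> arcs G. (c,e) \<in> (edge_succ G)\<^sup>*}"
  have "R \<subseteq> arcs G" "finite R" "R \<noteq> {}" using e unfolding R_def by auto
  then obtain c where c: "c \<in> R" "\<forall>d\<in>R. \<not> lt d c"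
    using finite_has_min[OF pop_lin] by blast
  have "in_degree G (tail G c) = 0"
  proof (rule ccontr)
    assume "in_degree G (tail G c) \<noteq> 0"
    hence "0 < card (in_arcs G (tail G c))" unfolding in_degree_def by simp
    hence "in_arcs G (tail G c) \<noteq> {}" using card_gt_0_iff by blast
    then obtain c' where c': "c' \<in> in_arcs G (tail G c)" by blast
    have cc: "(c',c) \<in> edge_succ G" using c c' by (auto simp: edge_succ_def R_def)
    hence "c' \<in> R" using c unfolding R_def by (auto intro: converse_rtrancl_into_rtrancl simp: edge_succ_def)
    moreover have "c \<noteq> c'" using cc no_loop by blast
    hence "lt c' c" using pop_p1 cc by blast
    ultimately show False using c by blast
  qed
  moreover have "tail G c \<in> verts G" using c unfolding R_def by auto
  ultimately have "is_source G (tail G c)" by (simp add: is_source_def)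
  hence "boundary G (tail G c)" using pop_source \<open>tail G c \<in> verts G\<close> by (simp add: boundary_def)
  hence "c \<in> input_edges G" using c unfolding R_def input_edges_def by auto
  thus ?thesis using c unfolding R_def by blast
qed

end


locale comp_ctx =
  fixes G1 :: "('v1,'e1) pre_digraph" and less1 :: "'e1 \<Rightarrow> 'e1 \<Rightarrow> bool"
    and G2 :: "('v2,'e2) pre_digraph" and less2 :: "'e2 \<Rightarrow> 'e2 \<Rightarrow> bool"
  assumes POP1: "POP_graph G1 less1" and POP2: "POP_graph G2 less2"
    and card_eq: "card (output_edges G1) = card (input_edges G2)"
begin

abbreviation "O1 \<equiv> output_edges G1"
abbreviation "I2 \<equiv> input_edges G2"
abbreviation "nn \<equiv> card (output_edges G1)"
abbreviation "CG \<equiv> comp_graph G1 less1 G2 less2"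
abbreviation "cord \<equiv> comp_order G1 less1 G2 less2"
abbreviation "r1 \<equiv> rank_in less1 (output_edges G1)"
abbreviation "r2 \<equiv> rank_in less2 (input_edges G2)"
abbreviation "on1 \<equiv> nth_in less1 (output_edges G1)"
abbreviation "in2 \<equiv> nth_in less2 (input_edges G2)"
abbreviation "S1 \<equiv> edge_succ G1"
abbreviation "S2 \<equiv> edge_succ G2"
abbreviation "SC \<equiv> edge_succ CG"

lemma L1: "linear_order_on_edges (arcs G1) less1" by (rule pop_lin[OF POP1])
lemma L2: "linear_order_on_edges (arcs G2) less2" by (rule pop_lin[OF POP2])
lemma sub1: "O1 \<subseteq> arcs G1" by (auto simp: output_edges_def)
lemma sub2: "I2 \<subseteq> arcs G2" by (auto simp: input_edges_def)
lemma fin1: "finite O1"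
  using sub1 fin_digraph.finite_arcs[OF pop_fin[OF POP1]] finite_subset by blast
lemma fin2: "finite I2"
  using sub2 fin_digraph.finite_arcs[OF pop_fin[OF POP2]] finite_subset by blast

lemma on1: "k < nn \<Longrightarrow> on1 k \<in> O1 \<and> r1 (on1 k) = k"
  using nth_in_props[OF L1 sub1 fin1] by blast
lemma in2: "k < nn \<Longrightarrow> in2 k \<in> I2 \<and> r2 (in2 k) = k"
  using nth_in_props[OF L2 sub2 fin2] card_eq by simp
lemma on1_arcs: "k < nn \<Longrightarrow> on1 k \<in> arcs G1" using on1 sub1 by blast
lemma in2_arcs: "k < nn \<Longrightarrow> in2 k \<in> arcs G2" using in2 sub2 by blast

lemma arcs_CG:
  "Old1 a \<in> arcs CG \<longleftrightarrow> a \<in> arcs G1 \<and> a \<notin> O1"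
  "Old2 b \<in> arcs CG \<longleftrightarrow> b \<in> arcs G2 \<and> b \<notin> I2"
  "Glue k \<in> arcs CG \<longleftrightarrow> k < nn"
  by (auto simp: comp_graph_def Let_def)

lemma th_CG:
  "tail CG (Old1 a) = Inl (tail G1 a)" "head CG (Old1 a) = Inl (head G1 a)"
  "tail CG (Old2 b) = Inr (tail G2 b)" "head CG (Old2 b) = Inr (head G2 b)"
  "tail CG (Glue k) = Inl (tail G1 (on1 k))" "head CG (Glue k) = Inr (head G2 (in2 k))"
  by (auto simp: comp_graph_def Let_def)

lemma SC_11: "(Old1 a, Old1 c) \<in> SC \<longleftrightarrow> a \<notin> O1 \<and> c \<notin> O1 \<and> (a,c) \<in> S1"
  by (auto simp: edge_succ_def arcs_CG th_CG)
lemma SC_1G: "(Old1 a, Glue k) \<in> SC \<longleftrightarrow> a \<notin> O1 \<and> k < nn \<and> (a, on1 k) \<in> S1"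
  using on1_arcs by (auto simp: edge_succ_def arcs_CG th_CG)
lemma SC_G2: "(Glue k, Old2 d) \<in> SC \<longleftrightarrow> k < nn \<and> d \<notin> I2 \<and> (in2 k, d) \<in> S2"
  using in2_arcs by (auto simp: edge_succ_def arcs_CG th_CG)
lemma SC_22: "(Old2 b, Old2 d) \<in> SC \<longleftrightarrow> b \<notin> I2 \<and> d \<notin> I2 \<and> (b,d) \<in> S2"
  by (auto simp: edge_succ_def arcs_CG th_CG)
lemma SC_no: "(Old1 a, Old2 b) \<notin> SC" "(Glue k, Old1 a) \<notin> SC" "(Glue k, Glue j) \<notin> SC"
  "(Old2 b, Old1 a) \<notin> SC" "(Old2 b, Glue k) \<notin> SC"
  by (auto simp: edge_succ_def arcs_CG th_CG)

lemmas SC_simps = SC_11 SC_1G SC_G2 SC_22 SC_no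

lemma proj: "(x,y) \<in> SC\<^sup>+ \<Longrightarrow> (case y of
    Old1 c \<Rightarrow> \<exists>a. x = Old1 a \<and> (a,c) \<in> S1\<^sup>+
  | Glue k \<Rightarrow> \<exists>a. x = Old1 a \<and> (a, on1 k) \<in> S1\<^sup>+
  | Old2 d \<Rightarrow> (\<exists>b. x = Old2 b \<and> (b,d) \<in> S2\<^sup>+) \<or> (\<exists>k<nn. x = Glue k \<and> (in2 k, d) \<in> S2\<^sup>+)
      \<or> (\<exists>a k. k<nn \<and> x = Old1 a \<and> (a, on1 k) \<in> S1\<^sup>+ \<and> (in2 k, d) \<in> S2\<^sup>+))"
proof (induction rule: trancl_induct)
  case (base y) thus ?case by (cases x; cases y) (auto simp: SC_simps)
next
  case (step y z)
  show ?case
  proof (cases y)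
    case (Old1 c)
    with step.IH obtain a where a: "x = Old1 a" "(a,c) \<in> S1\<^sup>+" by auto
    show ?thesis using step.hyps(2) Old1 a
      by (cases z) (auto simp: SC_simps intro: trancl_into_trancl)
  next
    case (Glue k)
    with step.IH obtain a where a: "x = Old1 a" "(a, on1 k) \<in> S1\<^sup>+" by auto
    show ?thesis using step.hyps(2) Glue a
      by (cases z) (fastforce simp: SC_simps)+
  next
    case (Old2 b)
    show ?thesis
    proof (cases z)
      case (Old2 d)
      with step.hyps(2) \<open>y = Old2 b\<close> have bd: "(b,d) \<in> S2" by (simp add: SC_simps)
      from step.IH \<open>y = Old2 b\<close> have
        "(\<exists>b'. x = Old2 b' \<and> (b',b) \<in> S2\<^sup>+) \<or> (\<exists>k<nn. x = Glue k \<and> (in2 k, b) \<in> S2\<^sup>+)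
          \<or> (\<exists>a k. k<nn \<and> x = Old1 a \<and> (a, on1 k) \<in> S1\<^sup>+ \<and> (in2 k, b) \<in> S2\<^sup>+)" by simp
      thus ?thesis unfolding Old2 cedge.case using bd by (blast intro: trancl_into_trancl)
    qed (use step.hyps(2) \<open>y = Old2 b\<close> in \<open>auto simp: SC_simps\<close>)
  qed
qed

end

context comp_ctx begin

lemma lift1: "(a,c) \<in> S1\<^sup>+ \<Longrightarrow> c \<notin> O1 \<Longrightarrow> (Old1 a, Old1 c) \<in> SC\<^sup>+"
proof (induction rule: trancl_induct)
  case (base y)
  have "a \<notin> O1" using base.hyps out_no_succ[OF POP1] by blast
  hence "(Old1 a, Old1 y) \<in> SC" using base by (simp add: SC_simps)
  thus ?case by blast
next
  case (step y z)
  have "y \<notin> O1" using step.hyps(2) out_no_succ[OF POP1] by blast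
  hence "(Old1 y, Old1 z) \<in> SC" using step by (simp add: SC_simps)
  thus ?case using step \<open>y \<notin> O1\<close> by (blast intro: trancl_into_trancl)
qed

lemma lift2: "(b,d) \<in> S2\<^sup>+ \<Longrightarrow> b \<notin> I2 \<Longrightarrow> (Old2 b, Old2 d) \<in> SC\<^sup>+"
proof (induction rule: trancl_induct)
  case (base y)
  have "y \<notin> I2" using base.hyps in_no_pred[OF POP2] by blast
  hence "(Old2 b, Old2 y) \<in> SC" using base by (simp add: SC_simps)
  thus ?case by blast
next
  case (step y z)
  have "y \<notin> I2" "z \<notin> I2" using step.hyps in_no_pred[OF POP2] by (blast dest: tranclD2)+
  hence "(Old2 y, Old2 z) \<in> SC" using step by (simp add: SC_simps)
  thus ?case using step by (blast intro: trancl_into_trancl)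
qed

lemma liftG1: "(a, on1 k) \<in> S1\<^sup>+ \<Longrightarrow> k < nn \<Longrightarrow> (Old1 a, Glue k) \<in> SC\<^sup>+"
proof -
  assume p: "(a, on1 k) \<in> S1\<^sup>+" and k: "k < nn"
  then obtain z where z: "(a,z) \<in> S1\<^sup>*" "(z, on1 k) \<in> S1" by (blast dest: tranclD2)
  have "z \<notin> O1" using z(2) out_no_succ[OF POP1] by blast
  hence e: "(Old1 z, Glue k) \<in> SC" using z k by (simp add: SC_simps)
  show ?thesis
  proof (cases "a = z")
    case True thus ?thesis using e by blast
  next
    case False
    hence "(a,z) \<in> S1\<^sup>+" using z(1) by (simp add: rtrancl_eq_or_trancl)
    thus ?thesis using lift1 \<open>z \<notin> O1\<close> e by (blast intro: trancl_into_trancl)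
  qed
qed

lemma liftG2: "(in2 k, d) \<in> S2\<^sup>+ \<Longrightarrow> k < nn \<Longrightarrow> (Glue k, Old2 d) \<in> SC\<^sup>+"
proof -
  assume p: "(in2 k, d) \<in> S2\<^sup>+" and k: "k < nn"
  then obtain z where z: "(in2 k, z) \<in> S2" "(z,d) \<in> S2\<^sup>*" by (blast dest: tranclD)
  have "z \<notin> I2" using z(1) in_no_pred[OF POP2] by blast
  hence e: "(Glue k, Old2 z) \<in> SC" using z k by (simp add: SC_simps)
  show ?thesis
  proof (cases "z = d")
    case True thus ?thesis using e by blast
  next
    case False
    hence "(z,d) \<in> S2\<^sup>+" using z(2) by (simp add: rtrancl_eq_or_trancl)
    thus ?thesis using lift2 \<open>z \<notin> I2\<close> e by (blast intro: trancl_into_trancl2)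
  qed
qed

lemma lift12: "(a, on1 k) \<in> S1\<^sup>+ \<Longrightarrow> (in2 k, d) \<in> S2\<^sup>+ \<Longrightarrow> k < nn \<Longrightarrow> (Old1 a, Old2 d) \<in> SC\<^sup>+"
  using liftG1 liftG2 by (meson trancl_trans)

lemma rank2_le: "r2 d \<le> nn" using rank_le_card[OF fin2] card_eq by simp
lemma rank1_le: "r1 a \<le> nn" using rank_le_card[OF fin1] by simp

lemma F1: assumes a: "a \<in> arcs G1" "a \<notin> O1"
  shows "r1 a < nn \<and> (a, on1 (r1 a)) \<in> S1\<^sup>+"
proof -
  obtain p where p: "p \<in> O1" "(a,p) \<in> S1\<^sup>*" using exists_out[OF POP1 a(1)] by blast
  have ap: "(a,p) \<in> S1\<^sup>+" using p a by (auto simp: rtrancl_eq_or_trancl)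
  have "less1 a p" using pop_p1[OF POP1 ap] a p by blast
  hence "r1 a \<le> r1 p" using rank_mono[OF L1 sub1 fin1] a p sub1 by blast
  moreover have "r1 p < nn" using rank_lt_card[OF L1 sub1 fin1 p(1)] .
  ultimately have lt: "r1 a < nn" by simp
  let ?j = "r1 a"
  have j: "on1 ?j \<in> O1" "r1 (on1 ?j) = ?j" using on1[OF lt] by auto
  have "(a, on1 ?j) \<in> S1\<^sup>+"
  proof (cases "on1 ?j = p")
    case True thus ?thesis using ap by simp
  next
    case False
    have "p = on1 (r1 p)" using nth_in_rank[OF L1 sub1 fin1 p(1)] by simp
    hence "?j \<noteq> r1 p" using False by auto
    hence "?j < r1 p" using \<open>r1 a \<le> r1 p\<close> by simp
    have l1: "less1 a (on1 ?j)"
      using rank_lt_iff2[OF L1 sub1 fin1, of a "on1 ?j"] a j sub1 by (metis order.refl)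
    have l2: "less1 (on1 ?j) p"
      using rank_lt_iff1[OF L1 sub1 fin1, of "on1 ?j" p] j p sub1 False \<open>?j < r1 p\<close> by auto
    have "(a, on1 ?j) \<in> S1\<^sup>+ \<or> (on1 ?j, p) \<in> S1\<^sup>+"
      by (rule pop_p2[OF POP1]) (use a j p sub1 l1 l2 ap in auto)
    thus ?thesis using out_no_path[OF POP1 j(1)] by blast
  qed
  thus ?thesis using lt by blast
qed

lemma F2: assumes d: "d \<in> arcs G2" "d \<notin> I2"
  shows "1 \<le> r2 d \<and> (in2 (r2 d - 1), d) \<in> S2\<^sup>+"
proof -
  obtain p where p: "p \<in> I2" "(p,d) \<in> S2\<^sup>*" using exists_in[OF POP2 d(1)] by blast
  have pd: "(p,d) \<in> S2\<^sup>+" using p d by (auto simp: rtrancl_eq_or_trancl)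
  have "less2 p d" using pop_p1[OF POP2 pd] d p by blast
  hence rp: "r2 p < r2 d" using rank_strict[OF L2 sub2 fin2] d p by blast
  let ?j = "r2 d - 1"
  have lt: "?j < nn" using rp rank2_le[of d] by simp
  have j: "in2 ?j \<in> I2" "r2 (in2 ?j) = ?j" using in2[OF lt] by auto
  have "(in2 ?j, d) \<in> S2\<^sup>+"
  proof (cases "in2 ?j = p")
    case True thus ?thesis using pd by simp
  next
    case False
    have "p = in2 (r2 p)" using nth_in_rank[OF L2 sub2 fin2 p(1)] by simp
    hence "?j \<noteq> r2 p" using False by auto
    hence "r2 p < ?j" using rp by simp
    have l1: "less2 p (in2 ?j)"
      using rank_lt_iff1[OF L2 sub2 fin2, of p "in2 ?j"] j p sub2 False \<open>r2 p < ?j\<close> by auto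
    have l2: "less2 (in2 ?j) d"
      using rank_lt_iff1[OF L2 sub2 fin2, of "in2 ?j" d] j d rp by (metis diff_less zero_less_one less_nat_zero_code neq0_conv)
    have "(p, in2 ?j) \<in> S2\<^sup>+ \<or> (in2 ?j, d) \<in> S2\<^sup>+"
      by (rule pop_p2[OF POP2]) (use d j p sub2 l1 l2 pd in auto)
    thus ?thesis using in_no_path[OF POP2 j(1)] by blast
  qed
  thus ?thesis using rp by simp
qed

end

context comp_ctx begin

lemma key_simps:
  "comp_key G1 less1 G2 less2 (Old1 a) = 3 * r1 a"
  "comp_key G1 less1 G2 less2 (Glue k) = 3 * k + 1"
  "comp_key G1 less1 G2 less2 (Old2 b) = 3 * r2 b - 1"
  by (simp_all add: comp_key_def)

lemma cord_unf: "cord x y \<longleftrightarrow> comp_key G1 less1 G2 less2 x < comp_key G1 less1 G2 less2 y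
   \<or> (comp_key G1 less1 G2 less2 x = comp_key G1 less1 G2 less2 y \<and> comp_within less1 less2 x y)"
  by (simp add: comp_order_def Let_def)

lemma within_simps:
  "comp_within less1 less2 (Old1 a) (Old1 b) = less1 a b"
  "comp_within less1 less2 (Old2 c) (Old2 d) = less2 c d"
  "comp_within less1 less2 (Old1 a) (Glue k) = False"
  "comp_within less1 less2 (Old1 a) (Old2 d) = False"
  "comp_within less1 less2 (Glue k) (Old1 a) = False"
  "comp_within less1 less2 (Glue k) (Glue j) = False"
  "comp_within less1 less2 (Glue k) (Old2 d) = False"
  "comp_within less1 less2 (Old2 d) (Old1 a) = False"
  "comp_within less1 less2 (Old2 d) (Glue k) = False"
  by (simp_all add: comp_within_def)

lemma co11: assumes "a \<in> arcs G1" "b \<in> arcs G1"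
  shows "cord (Old1 a) (Old1 b) \<longleftrightarrow> less1 a b"
proof
  assume "less1 a b"
  moreover have "r1 a \<le> r1 b" using rank_mono[OF L1 sub1 fin1] assms calculation by blast
  ultimately show "cord (Old1 a) (Old1 b)" by (auto simp: cord_unf key_simps within_simps)
next
  assume c: "cord (Old1 a) (Old1 b)"
  show "less1 a b"
  proof (cases "r1 a < r1 b")
    case True
    have "a \<noteq> b" using True by auto
    moreover have "\<not> less1 b a" using rank_mono[OF L1 sub1 fin1, of b a] assms True by auto
    ultimately show ?thesis using lin_total[OF L1] assms by blast
  next
    case False thus ?thesis using c by (auto simp: cord_unf key_simps within_simps)
  qed
qed

lemma co22: assumes "c \<in> arcs G2" "d \<in> arcs G2" "c \<notin> I2" "d \<notin> I2"
  shows "cord (Old2 c) (Old2 d) \<longleftrightarrow> less2 c d"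
proof -
  have pc: "1 \<le> r2 c" and pd: "1 \<le> r2 d" using F2 assms by auto
  show ?thesis
  proof
    assume "less2 c d"
    moreover have "r2 c \<le> r2 d" using rank_mono[OF L2 sub2 fin2] assms calculation by blast
    ultimately show "cord (Old2 c) (Old2 d)" using pc by (auto simp: cord_unf key_simps within_simps)
  next
    assume co: "cord (Old2 c) (Old2 d)"
    show "less2 c d"
    proof (cases "r2 c < r2 d")
      case True
      have "c \<noteq> d" using True by auto
      moreover have "\<not> less2 d c" using rank_mono[OF L2 sub2 fin2, of d c] assms True by auto
      ultimately show ?thesis using lin_total[OF L2] assms by blast
    next
      case False thus ?thesis using co pc pd by (auto simp: cord_unf key_simps within_simps)
    qed
  qed
qed

lemma co1G: "cord (Old1 a) (Glue k) \<longleftrightarrow> r1 a \<le> k"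
  by (auto simp: cord_unf key_simps within_simps)
lemma coG1: "cord (Glue k) (Old1 a) \<longleftrightarrow> k < r1 a"
  by (auto simp: cord_unf key_simps within_simps)
lemma coGG: "cord (Glue j) (Glue k) \<longleftrightarrow> j < k"
  by (auto simp: cord_unf key_simps within_simps)
lemma co12: "1 \<le> r2 d \<Longrightarrow> cord (Old1 a) (Old2 d) \<longleftrightarrow> r1 a < r2 d"
  by (auto simp: cord_unf key_simps within_simps)
lemma co21: "1 \<le> r2 d \<Longrightarrow> cord (Old2 d) (Old1 a) \<longleftrightarrow> r2 d \<le> r1 a"
  by (auto simp: cord_unf key_simps within_simps)
lemma coG2: "1 \<le> r2 d \<Longrightarrow> cord (Glue k) (Old2 d) \<longleftrightarrow> k < r2 d"
  by (auto simp: cord_unf key_simps within_simps)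
lemma co2G: "1 \<le> r2 d \<Longrightarrow> cord (Old2 d) (Glue k) \<longleftrightarrow> r2 d \<le> k"
  by (auto simp: cord_unf key_simps within_simps)

lemma t1: "a \<in> arcs G1 \<Longrightarrow> a \<notin> O1 \<Longrightarrow> k < nn \<Longrightarrow> less1 a (on1 k) \<longleftrightarrow> r1 a \<le> k"
  using rank_lt_iff2[OF L1 sub1 fin1, of a "on1 k"] on1[of k] by (metis)
lemma t2: "a \<in> arcs G1 \<Longrightarrow> a \<notin> O1 \<Longrightarrow> k < nn \<Longrightarrow> less1 (on1 k) a \<longleftrightarrow> k < r1 a"
  using rank_lt_iff1[OF L1 sub1 fin1, of "on1 k" a] on1[of k] by (metis)
lemma t3: "j < nn \<Longrightarrow> k < nn \<Longrightarrow> less1 (on1 j) (on1 k) \<longleftrightarrow> j < k"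
proof (cases "j = k")
  case True thus "j < nn \<Longrightarrow> k < nn \<Longrightarrow> ?thesis" using lin_irrefl[OF L1] on1_arcs by auto
next
  case False
  assume "j < nn" "k < nn"
  hence "on1 j \<noteq> on1 k" using on1 False by metis
  thus ?thesis using rank_lt_iff1[OF L1 sub1 fin1, of "on1 j" "on1 k"] on1 \<open>j < nn\<close> \<open>k < nn\<close> on1_arcs by auto
qed
lemma t4: "d \<in> arcs G2 \<Longrightarrow> d \<notin> I2 \<Longrightarrow> k < nn \<Longrightarrow> less2 (in2 k) d \<longleftrightarrow> k < r2 d"
  using rank_lt_iff1[OF L2 sub2 fin2, of "in2 k" d] in2[of k] by (metis)
lemma t5: "d \<in> arcs G2 \<Longrightarrow> d \<notin> I2 \<Longrightarrow> k < nn \<Longrightarrow> less2 d (in2 k) \<longleftrightarrow> r2 d \<le> k"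
  using rank_lt_iff2[OF L2 sub2 fin2, of d "in2 k"] in2[of k] by (metis)
lemma t6: "j < nn \<Longrightarrow> k < nn \<Longrightarrow> less2 (in2 j) (in2 k) \<longleftrightarrow> j < k"
proof (cases "j = k")
  case True thus "j < nn \<Longrightarrow> k < nn \<Longrightarrow> ?thesis" using lin_irrefl[OF L2] in2_arcs by auto
next
  case False
  assume "j < nn" "k < nn"
  hence "in2 j \<noteq> in2 k" using in2 False by metis
  thus ?thesis using rank_lt_iff1[OF L2 sub2 fin2, of "in2 j" "in2 k"] in2 \<open>j < nn\<close> \<open>k < nn\<close> in2_arcs by auto
qed

lemma H1': assumes a: "a \<in> arcs G1" "a \<notin> O1" and p: "(a, on1 k) \<in> S1\<^sup>+"
    and j: "r1 a \<le> j" "j \<le> k" and k: "k < nn"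
  shows "(a, on1 j) \<in> S1\<^sup>+"
proof (cases "j = k")
  case True thus ?thesis using p by simp
next
  case False
  hence jk: "j < k" using j by simp
  have l1: "less1 a (on1 j)" using t1 a jk k j by simp
  have l2: "less1 (on1 j) (on1 k)" using t3 jk k by simp
  have "(a, on1 j) \<in> S1\<^sup>+ \<or> (on1 j, on1 k) \<in> S1\<^sup>+"
    by (rule pop_p2[OF POP1]) (use a l1 l2 p on1_arcs jk k in auto)
  thus ?thesis using out_no_path[OF POP1] on1 jk k by (meson order.strict_trans)
qed

lemma H1: assumes a: "a \<in> arcs G1" "a \<notin> O1" and c: "c \<in> arcs G1" "c \<notin> O1"
    and p: "(a, c) \<in> S1\<^sup>+" and j: "r1 a \<le> j" "j < r1 c"
  shows "(a, on1 j) \<in> S1\<^sup>+"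
proof -
  have jn: "j < nn" using j rank1_le[of c] by simp
  have l1: "less1 a (on1 j)" using t1 a jn j by simp
  have l2: "less1 (on1 j) c" using t2 c jn j by simp
  have "(a, on1 j) \<in> S1\<^sup>+ \<or> (on1 j, c) \<in> S1\<^sup>+"
    by (rule pop_p2[OF POP1]) (use a c l1 l2 p on1_arcs jn in auto)
  thus ?thesis using out_no_path[OF POP1] on1 jn by blast
qed

lemma H2': assumes d: "d \<in> arcs G2" "d \<notin> I2" and p: "(in2 k, d) \<in> S2\<^sup>+"
    and j: "k \<le> j" "j < r2 d"
  shows "(in2 j, d) \<in> S2\<^sup>+"
proof (cases "j = k")
  case True thus ?thesis using p by simp
next
  case False
  hence jk: "k < j" using j by simp
  have jn: "j < nn" using j rank2_le[of d] by simp
  have l1: "less2 (in2 k) (in2 j)" using t6 jk jn by simp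
  have l2: "less2 (in2 j) d" using t4 d jn j by simp
  have "(in2 k, in2 j) \<in> S2\<^sup>+ \<or> (in2 j, d) \<in> S2\<^sup>+"
    by (rule pop_p2[OF POP2]) (use d l1 l2 p in2_arcs jk jn in auto)
  thus ?thesis using in_no_path[OF POP2] in2 jn by blast
qed

end

context comp_ctx begin

lemma within_trans:
  assumes xyz: "x \<in> arcs CG" "y \<in> arcs CG" "z \<in> arcs CG"
    and wxy: "comp_within less1 less2 x y" and wyz: "comp_within less1 less2 y z"
  shows "comp_within less1 less2 x z"
proof (cases x)
  case (Old1 a)
  obtain b where b: "y = Old1 b" "less1 a b" using wxy Old1 by (cases y) (auto simp: within_simps)
  obtain c where c: "z = Old1 c" "less1 b c" using wyz b by (cases z) (auto simp: within_simps)
  have "less1 a c" using lin_trans[OF L1, of a b c] b c Old1 xyz by (simp add: arcs_CG)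
  thus ?thesis using Old1 c by (simp add: within_simps)
next
  case (Old2 a)
  obtain b where b: "y = Old2 b" "less2 a b" using wxy Old2 by (cases y) (auto simp: within_simps)
  obtain c where c: "z = Old2 c" "less2 b c" using wyz b by (cases z) (auto simp: within_simps)
  have "less2 a c" using lin_trans[OF L2, of a b c] b c Old2 xyz by (simp add: arcs_CG)
  thus ?thesis using Old2 c by (simp add: within_simps)
next
  case (Glue k) thus ?thesis using wxy by (cases y) (auto simp: within_simps)
qed

lemma cord_irrefl: "x \<in> arcs CG \<Longrightarrow> \<not> cord x x"
  by (cases x) (auto simp: cord_unf within_simps arcs_CG dest: lin_irrefl[OF L1] lin_irrefl[OF L2])

lemma cord_trans: "x \<in> arcs CG \<Longrightarrow> y \<in> arcs CG \<Longrightarrow> z \<in> arcs CG \<Longrightarrow> cord x y \<Longrightarrow> cord y z \<Longrightarrow> cord x z"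
  using within_trans[of x y z] unfolding cord_unf by auto

lemma cord_total: assumes "x \<in> arcs CG" "y \<in> arcs CG" "x \<noteq> y" shows "cord x y \<or> cord y x"
proof (cases x)
  case (Old1 a)
  show ?thesis
  proof (cases y)
    case (Old1 b) thus ?thesis using \<open>x = Old1 a\<close> assms co11 lin_total[OF L1, of a b] by (auto simp: arcs_CG)
  next
    case (Old2 d)
    have "1 \<le> r2 d" using F2 assms Old2 by (auto simp: arcs_CG)
    thus ?thesis using \<open>x = Old1 a\<close> Old2 co12 co21 by auto
  next
    case (Glue k) thus ?thesis using \<open>x = Old1 a\<close> co1G coG1 by auto
  qed
next
  case (Old2 c)
  have c1: "1 \<le> r2 c" using F2 assms Old2 by (auto simp: arcs_CG)
  show ?thesis
  proof (cases y)
    case (Old1 b) thus ?thesis using \<open>x = Old2 c\<close> c1 co12 co21 by auto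
  next
    case (Old2 d) thus ?thesis using \<open>x = Old2 c\<close> assms co22 lin_total[OF L2, of c d] by (auto simp: arcs_CG)
  next
    case (Glue k) thus ?thesis using \<open>x = Old2 c\<close> c1 co2G coG2 by auto
  qed
next
  case (Glue j)
  show ?thesis
  proof (cases y)
    case (Old1 b) thus ?thesis using \<open>x = Glue j\<close> co1G coG1 by auto
  next
    case (Old2 d)
    have "1 \<le> r2 d" using F2 assms Old2 by (auto simp: arcs_CG)
    thus ?thesis using \<open>x = Glue j\<close> Old2 co2G coG2 by auto
  next
    case (Glue k) thus ?thesis using \<open>x = Glue j\<close> assms coGG by auto
  qed
qed

lemma SC_arcs: "(x,y) \<in> SC \<Longrightarrow> x \<in> arcs CG \<and> y \<in> arcs CG"
  by (simp add: edge_succ_def)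

lemma SCp_arcs: "(x,y) \<in> SC\<^sup>+ \<Longrightarrow> x \<in> arcs CG \<and> y \<in> arcs CG"
  using path_arcs_gen[of x y CG] by blast

lemma edge_cord: assumes e: "(x,y) \<in> SC" shows "cord x y"
proof -
  have xy: "x \<in> arcs CG" "y \<in> arcs CG" using SC_arcs[OF e] by auto
  show ?thesis
  proof (cases x)
    case (Old1 a)
    show ?thesis
    proof (cases y)
      case (Old1 c)
      have ac: "(a,c) \<in> S1" using e \<open>x = Old1 a\<close> Old1 by (simp add: SC_simps)
      hence "a \<noteq> c" using no_loop[OF POP1] by blast
      hence "less1 a c" using pop_p1[OF POP1, of a c] ac by blast
      thus ?thesis using co11 ac succ_arcs[OF POP1 ac] \<open>x = Old1 a\<close> Old1 by simp
    next
      case (Glue k)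
      have ak: "(a, on1 k) \<in> S1" "a \<notin> O1" "k < nn" using e \<open>x = Old1 a\<close> Glue by (simp_all add: SC_simps)
      hence "a \<noteq> on1 k" using on1 by blast
      hence "less1 a (on1 k)" using pop_p1[OF POP1, of a "on1 k"] ak by blast
      hence "r1 a \<le> k" using t1 ak succ_arcs[OF POP1 ak(1)] by blast
      thus ?thesis using co1G \<open>x = Old1 a\<close> Glue by simp
    next
      case (Old2 d) thus ?thesis using e \<open>x = Old1 a\<close> by (simp add: SC_simps)
    qed
  next
    case (Glue k)
    show ?thesis
    proof (cases y)
      case (Old2 d)
      have kd: "(in2 k, d) \<in> S2" "d \<notin> I2" "k < nn" using e \<open>x = Glue k\<close> Old2 by (simp_all add: SC_simps)
      hence "in2 k \<noteq> d" using in2 by blast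
      hence "less2 (in2 k) d" using pop_p1[OF POP2, of "in2 k" d] kd by blast
      hence "k < r2 d" using t4 kd succ_arcs[OF POP2 kd(1)] by blast
      moreover have "1 \<le> r2 d" using F2 kd succ_arcs[OF POP2 kd(1)] by blast
      ultimately show ?thesis using coG2 \<open>x = Glue k\<close> Old2 by simp
    qed (use e \<open>x = Glue k\<close> in \<open>simp_all add: SC_simps\<close>)
  next
    case (Old2 b)
    show ?thesis
    proof (cases y)
      case (Old2 d)
      have bd: "(b,d) \<in> S2" "b \<notin> I2" "d \<notin> I2" using e \<open>x = Old2 b\<close> Old2 by (simp_all add: SC_simps)
      hence "b \<noteq> d" using no_loop[OF POP2] by blast
      hence "less2 b d" using pop_p1[OF POP2, of b d] bd by blast
      thus ?thesis using co22 bd succ_arcs[OF POP2 bd(1)] \<open>x = Old2 b\<close> Old2 by simp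
    qed (use e \<open>x = Old2 b\<close> in \<open>simp_all add: SC_simps\<close>)
  qed
qed

lemma path_cord: "(x,y) \<in> SC\<^sup>+ \<Longrightarrow> cord x y"
proof (induction rule: trancl_induct)
  case (base y) thus ?case by (rule edge_cord)
next
  case (step y z)
  thus ?case using cord_trans[of x y z] edge_cord[OF step.hyps(2)] SCp_arcs[OF step.hyps(1)] SC_arcs[OF step.hyps(2)]
    by blast
qed

end

context comp_ctx begin

lemma A1: "Old1 a \<in> arcs CG \<Longrightarrow> a \<in> arcs G1 \<and> a \<notin> O1" by (simp add: arcs_CG)
lemma A2: "Old2 b \<in> arcs CG \<Longrightarrow> b \<in> arcs G2 \<and> b \<notin> I2" by (simp add: arcs_CG)
lemma AG: "Glue k \<in> arcs CG \<Longrightarrow> k < nn" by (simp add: arcs_CG)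

lemma main_p2:
  assumes xa: "x \<in> arcs CG" and ya: "y \<in> arcs CG" and za: "z \<in> arcs CG"
    and xy: "cord x y" and yz: "cord y z" and xz: "(x,z) \<in> SC\<^sup>+"
  shows "(x,y) \<in> SC\<^sup>+ \<or> (y,z) \<in> SC\<^sup>+"
proof -
  note pr = proj[OF xz]
  show ?thesis
  proof (cases z)
    case (Old1 c)
    then obtain a where a: "x = Old1 a" "(a,c) \<in> S1\<^sup>+" using pr by auto
    have aa: "a \<in> arcs G1" "a \<notin> O1" using A1 xa a by auto
    have cc: "c \<in> arcs G1" "c \<notin> O1" using A1 za Old1 by auto
    show ?thesis
    proof (cases y)
      case (Old1 b)
      have bb: "b \<in> arcs G1" "b \<notin> O1" using A1 ya Old1 by auto
      have "less1 a b" "less1 b c" using co11 xy yz aa bb cc a Old1 \<open>z = Old1 c\<close> by auto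
      hence "(a,b) \<in> S1\<^sup>+ \<or> (b,c) \<in> S1\<^sup>+" using pop_p2[OF POP1] aa bb cc a by blast
      thus ?thesis using lift1 bb cc a Old1 \<open>z = Old1 c\<close> by blast
    next
      case (Glue j)
      have "r1 a \<le> j" "j < r1 c" using co1G coG1 xy yz a Glue \<open>z = Old1 c\<close> by auto
      hence "(a, on1 j) \<in> S1\<^sup>+" using H1 aa cc a by blast
      thus ?thesis using liftG1 AG ya Glue a by blast
    next
      case (Old2 b)
      have bb: "b \<in> arcs G2" "b \<notin> I2" using A2 ya Old2 by auto
      have fb: "1 \<le> r2 b" "(in2 (r2 b - 1), b) \<in> S2\<^sup>+" using F2 bb by auto
      have "r1 a < r2 b" "r2 b \<le> r1 c" using co12 co21 fb xy yz a Old2 \<open>z = Old1 c\<close> by auto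
      hence j: "r1 a \<le> r2 b - 1" "r2 b - 1 < r1 c" using fb by auto
      hence "(a, on1 (r2 b - 1)) \<in> S1\<^sup>+" using H1 aa cc a by blast
      moreover have "r2 b - 1 < nn" using j rank1_le[of c] by simp
      ultimately show ?thesis using lift12 fb a Old2 by blast
    qed
  next
    case (Glue k)
    then obtain a where a: "x = Old1 a" "(a, on1 k) \<in> S1\<^sup>+" using pr by auto
    have aa: "a \<in> arcs G1" "a \<notin> O1" using A1 xa a by auto
    have kn: "k < nn" using AG za Glue by auto
    show ?thesis
    proof (cases y)
      case (Old1 b)
      have bb: "b \<in> arcs G1" "b \<notin> O1" using A1 ya Old1 by auto
      have "less1 a b" using co11 xy aa bb a Old1 by auto
      moreover have "r1 b \<le> k" using co1G yz Old1 \<open>z = Glue k\<close> by auto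
      hence "less1 b (on1 k)" using t1 bb kn by blast
      ultimately have "(a,b) \<in> S1\<^sup>+ \<or> (b, on1 k) \<in> S1\<^sup>+" using pop_p2[OF POP1] aa bb on1_arcs[OF kn] a by blast
      thus ?thesis using lift1 liftG1 bb kn a Old1 \<open>z = Glue k\<close> by blast
    next
      case (Glue j)
      have "r1 a \<le> j" "j < k" using co1G coGG xy yz a Glue \<open>z = Glue k\<close> by auto
      hence "(a, on1 j) \<in> S1\<^sup>+" using H1' aa a kn by simp
      thus ?thesis using liftG1 AG ya Glue a by blast
    next
      case (Old2 b)
      have bb: "b \<in> arcs G2" "b \<notin> I2" using A2 ya Old2 by auto
      have fb: "1 \<le> r2 b" "(in2 (r2 b - 1), b) \<in> S2\<^sup>+" using F2 bb by auto
      have "r1 a < r2 b" "r2 b \<le> k" using co12 co2G fb xy yz a Old2 \<open>z = Glue k\<close> by auto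
      hence j: "r1 a \<le> r2 b - 1" "r2 b - 1 \<le> k" using fb by auto
      hence "(a, on1 (r2 b - 1)) \<in> S1\<^sup>+" using H1' aa a kn by simp
      moreover have "r2 b - 1 < nn" using j kn by simp
      ultimately show ?thesis using lift12 fb a Old2 by blast
    qed
  next
    case (Old2 d)
    have dd: "d \<in> arcs G2" "d \<notin> I2" using A2 za Old2 by auto
    have fd: "1 \<le> r2 d" "(in2 (r2 d - 1), d) \<in> S2\<^sup>+" using F2 dd by auto
    from pr Old2 consider
        (i) b where "x = Old2 b" "(b,d) \<in> S2\<^sup>+"
      | (ii) k where "k < nn" "x = Glue k" "(in2 k, d) \<in> S2\<^sup>+"
      | (iii) a k where "k < nn" "x = Old1 a" "(a, on1 k) \<in> S1\<^sup>+" "(in2 k, d) \<in> S2\<^sup>+"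
      by auto
    thus ?thesis
    proof cases
      case (i b)
      have bb: "b \<in> arcs G2" "b \<notin> I2" using A2 xa i by auto
      have fb: "1 \<le> r2 b" "(in2 (r2 b - 1), b) \<in> S2\<^sup>+" using F2 bb by auto
      have pb: "(in2 (r2 b - 1), d) \<in> S2\<^sup>+" using fb i by (blast intro: trancl_trans)
      show ?thesis
      proof (cases y)
        case (Old1 c)
        have cc: "c \<in> arcs G1" "c \<notin> O1" using A1 ya Old1 by auto
        have fc: "r1 c < nn" "(c, on1 (r1 c)) \<in> S1\<^sup>+" using F1 cc by auto
        have "r2 b \<le> r1 c" "r1 c < r2 d" using co21 co12 fb fd xy yz i Old1 \<open>z = Old2 d\<close> by auto
        hence "(in2 (r1 c), d) \<in> S2\<^sup>+" using H2'[OF dd pb] by simp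
        thus ?thesis using lift12 fc Old1 \<open>z = Old2 d\<close> by blast
      next
        case (Glue j)
        have "r2 b \<le> j" "j < r2 d" using co2G coG2 fb fd xy yz i Glue \<open>z = Old2 d\<close> by auto
        hence "(in2 j, d) \<in> S2\<^sup>+" using H2'[OF dd pb] by simp
        thus ?thesis using liftG2 AG ya Glue \<open>z = Old2 d\<close> by blast
      next
        case (Old2 c)
        have cc: "c \<in> arcs G2" "c \<notin> I2" using A2 ya Old2 by auto
        have "less2 b c" "less2 c d" using co22 xy yz bb cc dd i Old2 \<open>z = Old2 d\<close> by auto
        hence "(b,c) \<in> S2\<^sup>+ \<or> (c,d) \<in> S2\<^sup>+" using pop_p2[OF POP2] bb cc dd i by blast
        thus ?thesis using lift2 bb cc i Old2 \<open>z = Old2 d\<close> by blast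
      qed
    next
      case (ii k)
      show ?thesis
      proof (cases y)
        case (Old1 b)
        have bb: "b \<in> arcs G1" "b \<notin> O1" using A1 ya Old1 by auto
        have fb: "r1 b < nn" "(b, on1 (r1 b)) \<in> S1\<^sup>+" using F1 bb by auto
        have "k < r1 b" "r1 b < r2 d" using coG1 co12 fd xy yz ii Old1 \<open>z = Old2 d\<close> by auto
        hence "(in2 (r1 b), d) \<in> S2\<^sup>+" using H2'[OF dd ii(3)] by simp
        thus ?thesis using lift12 fb Old1 \<open>z = Old2 d\<close> by blast
      next
        case (Glue j)
        have "k < j" "j < r2 d" using coGG coG2 fd xy yz ii Glue \<open>z = Old2 d\<close> by auto
        hence "(in2 j, d) \<in> S2\<^sup>+" using H2'[OF dd ii(3)] by simp
        thus ?thesis using liftG2 AG ya Glue \<open>z = Old2 d\<close> by blast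
      next
        case (Old2 b)
        have bb: "b \<in> arcs G2" "b \<notin> I2" using A2 ya Old2 by auto
        have fb: "1 \<le> r2 b" using F2 bb by auto
        have "k < r2 b" using coG2 fb xy ii Old2 by auto
        hence "less2 (in2 k) b" using t4 bb ii by blast
        moreover have "less2 b d" using co22 yz bb dd Old2 \<open>z = Old2 d\<close> by auto
        ultimately have "(in2 k, b) \<in> S2\<^sup>+ \<or> (b,d) \<in> S2\<^sup>+"
          using pop_p2[OF POP2] in2_arcs[OF ii(1)] bb dd ii by blast
        thus ?thesis using liftG2 lift2 bb ii Old2 \<open>z = Old2 d\<close> by blast
      qed
    next
      case (iii a k)
      have aa: "a \<in> arcs G1" "a \<notin> O1" using A1 xa iii by auto
      show ?thesis
      proof (cases y)
        case (Old1 b)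
        have bb: "b \<in> arcs G1" "b \<notin> O1" using A1 ya Old1 by auto
        have fb: "r1 b < nn" "(b, on1 (r1 b)) \<in> S1\<^sup>+" using F1 bb by auto
        have ab: "less1 a b" using co11 xy aa bb iii Old1 by auto
        have bd: "r1 b < r2 d" using co12 fd yz Old1 \<open>z = Old2 d\<close> by auto
        show ?thesis
        proof (cases "r1 b \<le> k")
          case True
          hence "less1 b (on1 k)" using t1 bb iii by blast
          hence "(a,b) \<in> S1\<^sup>+ \<or> (b, on1 k) \<in> S1\<^sup>+"
            using pop_p2[OF POP1] ab aa bb on1_arcs[OF iii(1)] iii by blast
          thus ?thesis using lift1 lift12 bb iii Old1 \<open>z = Old2 d\<close> by blast
        next
          case False
          hence "(in2 (r1 b), d) \<in> S2\<^sup>+" using H2'[OF dd iii(4)] bd by simp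
          thus ?thesis using lift12 fb Old1 \<open>z = Old2 d\<close> by blast
        qed
      next
        case (Glue j)
        have j: "r1 a \<le> j" "j < r2 d" using co1G coG2 fd xy yz iii Glue \<open>z = Old2 d\<close> by auto
        show ?thesis
        proof (cases "j \<le> k")
          case True
          hence "(a, on1 j) \<in> S1\<^sup>+" using H1'[OF aa iii(3)] j iii by simp
          thus ?thesis using liftG1 AG ya Glue iii by blast
        next
          case False
          hence "(in2 j, d) \<in> S2\<^sup>+" using H2'[OF dd iii(4)] j by simp
          thus ?thesis using liftG2 AG ya Glue \<open>z = Old2 d\<close> by blast
        qed
      next
        case (Old2 b)
        have bb: "b \<in> arcs G2" "b \<notin> I2" using A2 ya Old2 by auto
        have fb: "1 \<le> r2 b" "(in2 (r2 b - 1), b) \<in> S2\<^sup>+" using F2 bb by auto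
        have ab: "r1 a < r2 b" using co12 fb xy iii Old2 by auto
        have bd: "less2 b d" using co22 yz bb dd Old2 \<open>z = Old2 d\<close> by auto
        show ?thesis
        proof (cases "k < r2 b")
          case True
          hence "less2 (in2 k) b" using t4 bb iii by blast
          hence "(in2 k, b) \<in> S2\<^sup>+ \<or> (b,d) \<in> S2\<^sup>+"
            using pop_p2[OF POP2] in2_arcs[OF iii(1)] bb dd bd iii by blast
          thus ?thesis using lift12 lift2 bb iii Old2 \<open>z = Old2 d\<close> by blast
        next
          case False
          hence "(a, on1 (r2 b - 1)) \<in> S1\<^sup>+" using H1'[OF aa iii(3)] ab iii by simp
          moreover have "r2 b - 1 < nn" using False iii fb by simp
          ultimately show ?thesis using lift12 fb iii Old2 by blast
        qed
      qed
    qed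
  qed
qed

lemma planar: "planar_order CG cord"
  unfolding planar_order_def
proof (intro conjI)
  show "linear_order_on_edges (arcs CG) cord"
    unfolding linear_order_on_edges_def using cord_irrefl cord_trans cord_total by blast
  show "\<forall>e1\<in>arcs CG. \<forall>e2\<in>arcs CG. edge_path CG e1 e2 \<longrightarrow> cord e1 e2"
    using path_cord by (auto simp: edge_path_def)
  show "\<forall>e1\<in>arcs CG. \<forall>e2\<in>arcs CG. \<forall>e3\<in>arcs CG. cord e1 e2 \<longrightarrow> cord e2 e3 \<longrightarrow>
        edge_path CG e1 e3 \<longrightarrow> edge_path CG e1 e2 \<or> edge_path CG e2 e3"
  proof (intro ballI impI)
    fix e1 e2 e3 assume e: "e1 \<in> arcs CG" "e2 \<in> arcs CG" "e3 \<in> arcs CG"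
      and o: "cord e1 e2" "cord e2 e3" and p: "edge_path CG e1 e3"
    have "e1 \<noteq> e2" "e2 \<noteq> e3" using o cord_irrefl e by auto
    thus "edge_path CG e1 e2 \<or> edge_path CG e2 e3"
      using main_p2[OF e o] p by (auto simp: edge_path_def)
  qed
qed

end

theorem theorem2p2:
  fixes G1 :: "('v1,'e1) pre_digraph" and less1 :: "'e1 \<Rightarrow> 'e1 \<Rightarrow> bool"
    and G2 :: "('v2,'e2) pre_digraph" and less2 :: "'e2 \<Rightarrow> 'e2 \<Rightarrow> bool"
  assumes "POP_graph G1 less1" and "POP_graph G2 less2"
    and "card (output_edges G1) = card (input_edges G2)"
  shows "planar_order (comp_graph G1 less1 G2 less2) (comp_order G1 less1 G2 less2)"
proof -
  interpret comp_ctx G1 less1 G2 less2 using assms by unfold_locales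
  show ?thesis by (rule planar)
qed

end
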